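(* Let $a,c$ be positive integers and $\vec k=(a,1,c)$. Then $\mathrm{depth}(\pi)=\mathrm{bounce}(\pi)$ for every $\pi\in\mathcal D_{\vec k}$, and hence $$\sum_{\pi\in\mathcal D_{\vec k}}q^{\mathrm{area}(\pi)}t^{\mathrm{depth}(\pi)}=\sum_{\pi\in\mathcal D_{\vec k}}q^{\mathrm{area}(\pi)}t^{\mathrm{bounce}(\pi)}.$$
   Context: For $\vec k=(k_1,\dots,k_\ell)$ put $|\vec k|=\sum k_i$, $N=|\vec k|+\ell$. A $\vec k$-Dyck path is a word $\pi=\pi_1\cdots\pi_N$ containing the letters $S^{k_1},\dots,S^{k_\ell}$ exactly once each and in this order, together with $|\vec k|$ letters $W$, such that all starting ranks are nonnegative, where $r_1=0$, $r_{i+1}=r_i+k_j$ if $\pi_i=S^{k_j}$ and $r_{i+1}=r_i-1$ if $\pi_i=W$. $\mathcal D_{\vec k}$ is the set of such paths. $\mathrm{area}(\pi)=\sum_j a_j$ where $a_j$ is the starting rank of $S^{k_j}$. Filling algorithms: in a tableau of $\ell$ top-justified columns, column $i$ having $k_i+1$ cells, place $1$ at the top of column 1; for $i=2,\dots,N$, call an entry active if it is currently the bottom entry of a column $i'$ not yet containing $k_{i'}+1$ entries; if $\pi_i=W$ place $i$ immediately below the smallest active entry (algorithm $\eta$) resp. the largest active entry (algorithm $\eta_*$); otherwise place $i$ at the top of the first empty column. Ranking: for a filled tableau $F$, column 1 gets ranks $0,\dots,k_1$ top to bottom; for $i\ge2$, if the top entry of column $i$ of $F$ is $A+1$ and $A$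 has rank $\alpha$, column $i$ gets ranks $\alpha,\dots,\alpha+k_i$ top to bottom. $\mathrm{bounce}(\pi)$ is the sum of the first-row ranks for $F=\eta(\pi)$, and $\mathrm{depth}(\pi)$ is the sum of the first-row ranks for $F=\eta_*(\pi)$. *)

theory Defs
  imports Main
begin

text \<open>The letter \<open>S j\<close> (j 0-based) stands for the paper's
  letter S^{k_{j+1}}, i.e. the (j+1)-st north-type letter, which raises the rank by k!j;
  \<open>W\<close> lowers the rank by one.\<close>

datatype letter = S nat | W

definition step :: "nat list \<Rightarrow> letter \<Rightarrow> int" where
  "step k x = (case x of S j \<Rightarrow> int (k ! j) | W \<Rightarrow> -1)"

fun ranks_from :: "nat list \<Rightarrow> int \<Rightarrow> letter list \<Rightarrow> int list" where
  "ranks_from k r [] = []"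
| "ranks_from k r (x # xs) = r # ranks_from k (r + step k x) xs"

definition start_ranks :: "nat list \<Rightarrow> letter list \<Rightarrow> int list" where
  "start_ranks k \<pi> = ranks_from k 0 \<pi>"

definition dyck_paths :: "nat list \<Rightarrow> letter list set" where
  "dyck_paths k = {\<pi>. filter (\<lambda>x. x \<noteq> W) \<pi> = map S [0..<length k]
                      \<and> count_list \<pi> W = sum_list k
                      \<and> (\<forall>r \<in> set (start_ranks k \<pi>). 0 \<le> r)}"

definition area :: "nat list \<Rightarrow> letter list \<Rightarrow> nat" where
  "area k \<pi> = (\<Sum>i<length \<pi>. if \<pi> ! i \<noteq> W then nat (start_ranks k \<pi> ! i) else 0)"

text \<open>Tableaux: a list of l columns, each a list of entries from top to bottom.
  The selector \<open>sel\<close> picks, from the set of active entries, the one below which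
  the next entry is put (Min for eta, Max for eta_star).\<close>

definition active_cols :: "nat list \<Rightarrow> nat list list \<Rightarrow> nat set" where
  "active_cols k F = {j. j < length F \<and> F ! j \<noteq> [] \<and> length (F ! j) < k ! j + 1}"

definition fill_step :: "(nat set \<Rightarrow> nat) \<Rightarrow> nat list \<Rightarrow> nat list list \<Rightarrow> nat \<times> letter
    \<Rightarrow> nat list list" where
  "fill_step sel k F p =
     (let i = fst p in
      if snd p = W then
        (let v = sel ((\<lambda>j. last (F ! j)) ` active_cols k F);
             j = (LEAST j. j \<in> active_cols k F \<and> last (F ! j) = v)
         in F[j := F ! j @ [i]])
      else
        (let j = (LEAST j. j < length F \<and> F ! j = []) in F[j := [i]]))"

definition fill :: "(nat set \<Rightarrow> nat) \<Rightarrow> nat list \<Rightarrow> letter list \<Rightarrow> nat list list" where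
  "fill sel k \<pi> =
     foldl (fill_step sel k) ([1] # replicate (length k - 1) [])
           (zip [2..<Suc (length \<pi>)] (tl \<pi>))"

definition eta :: "nat list \<Rightarrow> letter list \<Rightarrow> nat list list" where
  "eta k \<pi> = fill Min k \<pi>"

definition eta_star :: "nat list \<Rightarrow> letter list \<Rightarrow> nat list list" where
  "eta_star k \<pi> = fill Max k \<pi>"

text \<open>Ranking: rs is the list of ranks of the top cells of the columns processed so far;
  an entry A in column j at row r (0-based) has rank rs!j + r.\<close>

definition entry_rank :: "nat list list \<Rightarrow> nat list \<Rightarrow> nat \<Rightarrow> nat" where
  "entry_rank F rs A =
     (let j = (LEAST j. j < length rs \<and> A \<in> set (F ! j));
          r = (LEAST r. r < length (F ! j) \<and> F ! j ! r = A)
      in rs ! j + r)"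

definition top_ranks :: "nat list list \<Rightarrow> nat list" where
  "top_ranks F = foldl (\<lambda>rs i. rs @ [entry_rank F rs (hd (F ! i) - 1)]) [0] [1..<length F]"

definition bounce :: "nat list \<Rightarrow> letter list \<Rightarrow> nat" where
  "bounce k \<pi> = sum_list (top_ranks (eta k \<pi>))"

definition depth :: "nat list \<Rightarrow> letter list \<Rightarrow> nat" where
  "depth k \<pi> = sum_list (top_ranks (eta_star k \<pi>))"

end

theory Submission
  imports Defs
begin

lemma rk_tail: "set (ranks_from k (r - int n) ys) \<subseteq> set (ranks_from k r (replicate n W @ ys))"
proof (induction n arbitrary: r)
  case 0 then show ?case by simp
next
  case (Suc n)
  have "set (ranks_from k (r - 1 - int n) ys) \<subseteq> set (ranks_from k (r-1) (replicate n W @ ys))"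
    using Suc by blast
  then show ?case by (auto simp: step_def algebra_simps)
qed

lemma rep_W: "\<forall>u\<in>set us. \<not> u \<noteq> W \<Longrightarrow> us = replicate (length us) W"
  by (simp add: replicate_length_same)

lemma dyck_char:
  assumes "\<pi> \<in> dyck_paths [a,1,c]"
  shows "\<exists>x y z. \<pi> = S 0 # replicate x W @ S 1 # replicate y W @ S 2 # replicate z W \<and> x \<le> a \<and> x + y \<le> a + 1"
proof -
  have f: "filter (\<lambda>x. x \<noteq> W) \<pi> = [S 0, S 1, S 2]" and nn: "\<forall>r\<in>set (start_ranks [a,1,c] \<pi>). 0 \<le> r"
    using assms by (auto simp: dyck_paths_def eval_nat_numeral)
  obtain u0 v0 where 0: "\<pi> = u0 @ S 0 # v0" "\<forall>u\<in>set u0. \<not> u \<noteq> W" "[S 1, S 2] = filter (\<lambda>x. x \<noteq> W) v0"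
    using filter_eq_ConsD[OF f] by auto
  obtain u1 v1 where 1: "v0 = u1 @ S 1 # v1" "\<forall>u\<in>set u1. \<not> u \<noteq> W" "[S 2] = filter (\<lambda>x. x \<noteq> W) v1"
    using filter_eq_ConsD[OF 0(3)[symmetric]] by auto
  obtain u2 v2 where 2: "v1 = u2 @ S 2 # v2" "\<forall>u\<in>set u2. \<not> u \<noteq> W" "[] = filter (\<lambda>x. x \<noteq> W) v2"
    using filter_eq_ConsD[OF 1(3)[symmetric]] by auto
  have v2: "\<forall>u\<in>set v2. \<not> u \<noteq> W" using 2(3) by (metis (mono_tags) filter_empty_conv)
  define x0 where "x0 = length u0"
  define x where "x = length u1"
  define y where "y = length u2"
  define z where "z = length v2"
  have pe: "\<pi> = replicate x0 W @ S 0 # replicate x W @ S 1 # replicate y W @ S 2 # replicate z W"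
  proof -
    have "u0 = replicate x0 W" using rep_W[OF 0(2)] x0_def by simp
    moreover have "u1 = replicate x W" using rep_W[OF 1(2)] x_def by simp
    moreover have "u2 = replicate y W" using rep_W[OF 2(2)] y_def by simp
    moreover have "v2 = replicate z W" using rep_W[OF v2] z_def by simp
    ultimately show ?thesis using 0(1) 1(1) 2(1) by simp
  qed
  define rest where "rest = replicate x W @ S 1 # replicate y W @ S 2 # replicate z W"
  have "x0 = 0"
  proof (rule ccontr)
    assume "x0 \<noteq> 0"
    then have "\<pi> = W # (replicate (x0 - 1) W @ S 0 # rest)" using pe rest_def
      by (cases x0) auto
    then have "set (ranks_from [a,1,c] (-1 - int (x0 - 1)) (S 0 # rest)) \<subseteq> set (start_ranks [a,1,c] \<pi>)"
      using rk_tail[of "[a,1,c]" "-1" "x0 - 1" "S 0 # rest"] by (auto simp: start_ranks_def step_def)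
    then have "-1 - int (x0 - 1) \<in> set (start_ranks [a,1,c] \<pi>)" by auto
    with nn have "0 \<le> -1 - int (x0 - 1)" by blast
    then show False by simp
  qed
  then have pe2: "\<pi> = S 0 # replicate x W @ S 1 # replicate y W @ S 2 # replicate z W" using pe by simp
  have s0: "set (ranks_from [a,1,c] (int a - int x) (S 1 # replicate y W @ S 2 # replicate z W)) \<subseteq> set (start_ranks [a,1,c] \<pi>)"
  proof -
    have "start_ranks [a,1,c] \<pi> = 0 # ranks_from [a,1,c] (int a) (replicate x W @ S 1 # replicate y W @ S 2 # replicate z W)"
      by (simp add: pe2 start_ranks_def step_def)
    then show ?thesis using rk_tail[of "[a,1,c]" "int a" x "S 1 # replicate y W @ S 2 # replicate z W"] by auto
  qed
  have "set (ranks_from [a,1,c] (int a - int x + 1 - int y) (S 2 # replicate z W)) \<subseteq> set (ranks_from [a,1,c] (int a - int x) (S 1 # replicate y W @ S 2 # replicate z W))"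
  proof -
    have "ranks_from [a,1,c] (int a - int x) (S 1 # replicate y W @ S 2 # replicate z W) = (int a - int x) # ranks_from [a,1,c] (int a - int x + 1) (replicate y W @ S 2 # replicate z W)"
      by (simp add: step_def)
    then show ?thesis using rk_tail[of "[a,1,c]" "int a - int x + 1" y "S 2 # replicate z W"] by auto
  qed
  then have s: "set (ranks_from [a,1,c] (int a - int x + 1 - int y) (S 2 # replicate z W)) \<subseteq> set (start_ranks [a,1,c] \<pi>)"
    using s0 by blast
  have "int a - int x \<in> set (start_ranks [a,1,c] \<pi>)" using s0 by auto
  then have "0 \<le> int a - int x" using nn by blast
  then have "x \<le> a" by simp
  moreover have "int a - int x + 1 - int y \<in> set (start_ranks [a,1,c] \<pi>)" using s by auto
  then have "0 \<le> int a - int x + 1 - int y" using nn by blast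
  then have "x + y \<le> a + 1" by simp
  ultimately show ?thesis using pe2 by blast
qed

lemma Wstep:
  assumes "j0 \<in> active_cols k F"
    "sel ((\<lambda>j. last (F ! j)) ` active_cols k F) = last (F ! j0)"
    "\<forall>j\<in>active_cols k F. j < j0 \<longrightarrow> last (F ! j) \<noteq> last (F ! j0)"
  shows "fill_step sel k F (i, W) = F[j0 := F ! j0 @ [i]]"
proof -
  have "(LEAST j. j \<in> active_cols k F \<and> last (F ! j) = last (F ! j0)) = j0"
    by (rule Least_equality) (use assms in \<open>auto simp: not_le[symmetric]\<close>)
  then show ?thesis using assms(2) by (simp add: fill_step_def Let_def)
qed

lemma Sstep:
  assumes "j0 < length F" "F ! j0 = []" "\<forall>j<j0. F ! j \<noteq> []"
  shows "fill_step sel k F (i, S m) = F[j0 := [i]]"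
proof -
  have "(LEAST j. j < length F \<and> F ! j = []) = j0"
    by (rule Least_equality) (use assms in \<open>auto simp: not_le[symmetric]\<close>)
  then show ?thesis by (simp add: fill_step_def Let_def)
qed

lemma Wtail:
  assumes "\<forall>p\<in>set ps. snd p = W"
  shows "length (foldl (fill_step sel k) F ps) = length F \<and>
    (\<forall>j<length F. \<exists>e. foldl (fill_step sel k) F ps ! j = F ! j @ e \<and> set e \<subseteq> fst ` set ps)"
  using assms
proof (induction ps arbitrary: F)
  case Nil then show ?case by simp
next
  case (Cons p ps)
  obtain i where p: "p = (i, W)" using Cons.prems by (cases p) auto
  obtain j0 where st: "fill_step sel k F p = F[j0 := F ! j0 @ [i]]"
    unfolding p fill_step_def Let_def by auto
  define F' where "F' = F[j0 := F ! j0 @ [i]]"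
  have IH: "length (foldl (fill_step sel k) F' ps) = length F' \<and>
    (\<forall>j<length F'. \<exists>e. foldl (fill_step sel k) F' ps ! j = F' ! j @ e \<and> set e \<subseteq> fst ` set ps)"
    using Cons by simp
  have L: "length F' = length F" by (simp add: F'_def)
  have "\<forall>j<length F. \<exists>e. foldl (fill_step sel k) F' ps ! j = F ! j @ e \<and> set e \<subseteq> fst ` set (p # ps)"
  proof (intro allI impI)
    fix j assume j: "j < length F"
    obtain e where e: "foldl (fill_step sel k) F' ps ! j = F' ! j @ e" "set e \<subseteq> fst ` set ps"
      using IH j L by auto
    show "\<exists>e. foldl (fill_step sel k) F' ps ! j = F ! j @ e \<and> set e \<subseteq> fst ` set (p # ps)"
    proof (cases "j = j0")
      case True
      then show ?thesis using e j p by (intro exI[of _ "[i] @ e"]) (auto simp: F'_def)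
    next
      case False
      then show ?thesis using e j by (intro exI[of _ e]) (auto simp: F'_def)
    qed
  qed
  then show ?case using IH L st by (simp add: F'_def)
qed

lemma act3: "j \<in> active_cols [k0,k1,k2] [c0, c1, c2] \<longleftrightarrow>
  (j = 0 \<and> c0 \<noteq> [] \<and> length c0 < k0 + 1) \<or> (j = 1 \<and> c1 \<noteq> [] \<and> length c1 < k1 + 1)
  \<or> (j = 2 \<and> c2 \<noteq> [] \<and> length c2 < k2 + 1)"
proof -
  have "j < 3 \<longleftrightarrow> j = 0 \<or> j = 1 \<or> j = 2" by auto
  then show ?thesis unfolding active_cols_def by auto
qed

lemma act_only0:
  assumes "c0 \<noteq> []" "length c0 < a + 1" "c1 = [] \<or> 2 \<le> length c1"
  shows "active_cols [a,1,c] [c0, c1, []] = {0}"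
  using assms by (auto simp: act3)

lemma colfill:
  assumes sel1: "\<And>v. sel {v} = v"
    and "c0 \<noteq> []" "length c0 + n \<le> a + 1" "c1 = [] \<or> 2 \<le> length c1"
  shows "foldl (fill_step sel [a,1,c]) [c0, c1, []] (zip [i..<i+n] (replicate n W)) = [c0 @ [i..<i+n], c1, []]"
  using assms(2-)
proof (induction n arbitrary: c0 i)
  case 0 then show ?case by simp
next
  case (Suc n)
  have z: "zip [i..<i+Suc n] (replicate (Suc n) W) = (i, W) # zip [Suc i..<Suc i + n] (replicate n W)"
    by (simp add: upt_conv_Cons)
  have A: "active_cols [a,1,c] [c0, c1, []] = {0}" using Suc.prems by (intro act_only0) auto
  have st: "fill_step sel [a,1,c] [c0, c1, []] (i, W) = [c0 @ [i], c1, []]"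
  proof -
    have "fill_step sel [a,1,c] [c0, c1, []] (i, W) = [c0, c1, []][0 := [c0, c1, []] ! 0 @ [i]]"
      by (rule Wstep) (use A sel1 in auto)
    then show ?thesis by simp
  qed
  have "foldl (fill_step sel [a,1,c]) [c0 @ [i], c1, []] (zip [Suc i..<Suc i + n] (replicate n W))
     = [c0 @ [i] @ [Suc i..<Suc i+n], c1, []]"
    using Suc.IH[of "c0 @ [i]" "Suc i"] Suc.prems by simp
  moreover have "[i] @ [Suc i..<Suc i+n] = [i..<i + Suc n]" by (simp add: upt_conv_Cons)
  ultimately show ?case using z st by simp
qed

lemma zcons:
  assumes "n = m + length xs + Suc (length ys)"
  shows "zip [m..<n] (xs @ s # ys) = zip [m..<m+length xs] xs @ (m + length xs, s) # zip [Suc (m+length xs)..<n] ys"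
proof -
  have "[m..<n] = [m..<m+length xs] @ [m+length xs..<n]" using assms upt_add_eq_append[of m "m + length xs" "Suc (length ys)"] by simp
  moreover have "[m+length xs..<n] = (m + length xs) # [Suc (m+length xs)..<n]" by (subst upt_conv_Cons) (use assms in auto)
  ultimately show ?thesis by (simp add: zip_append)
qed

lemma er:
  assumes "j0 < length rs" "A \<in> set (F ! j0)" "\<forall>j<j0. A \<notin> set (F ! j)" "r0 < length (F ! j0)"
    "F ! j0 ! r0 = A" "\<forall>r<r0. F ! j0 ! r \<noteq> A"
  shows "entry_rank F rs A = rs ! j0 + r0"
proof -
  have 1: "(LEAST j. j < length rs \<and> A \<in> set (F ! j)) = j0"
    by (rule Least_equality) (use assms in \<open>auto simp: not_le[symmetric]\<close>)
  have 2: "(LEAST r. r < length (F ! j0) \<and> F ! j0 ! r = A) = r0"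
    by (rule Least_equality) (use assms in \<open>auto simp: not_le[symmetric]\<close>)
  show ?thesis using 1 2 by (simp add: entry_rank_def Let_def)
qed

lemma er0:
  assumes "r0 < length c0" "c0 ! r0 = A" "\<forall>r<r0. c0 ! r \<noteq> A" "rs \<noteq> []"
  shows "entry_rank ((c0 @ e0) # G) rs A = rs ! 0 + r0"
  by (rule er) (use assms in \<open>auto simp: nth_append\<close>)

lemma er1:
  assumes "A \<notin> set c0" "A \<notin> set e0" "r0 < length c1" "c1 ! r0 = A" "\<forall>r<r0. c1 ! r \<noteq> A" "2 \<le> length rs"
  shows "entry_rank ((c0 @ e0) # (c1 @ e1) # G) rs A = rs ! 1 + r0"
  by (rule er) (use assms in \<open>auto simp: nth_append less_Suc_eq\<close>)

lemma fst_zip_sub: "fst ` set (zip xs ys) \<subseteq> set xs"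
  by (auto dest: set_zip_leftD)

lemma fin:
  assumes "c0 \<noteq> []" "c1 \<noteq> []"
  shows "\<exists>e0 e1 e2. foldl (fill_step sel k) (fill_step sel k [c0, c1, []] (i, S 2)) (zip [Suc i..<Suc i + z] (replicate z W))
     = [c0 @ e0, c1 @ e1, i # e2] \<and> (\<forall>v \<in> set e0 \<union> set e1. i < v)"
proof -
  have st: "fill_step sel k [c0, c1, []] (i, S 2) = [c0, c1, [i]]"
    by (subst Sstep[of 2]) (use assms in \<open>auto simp: less_Suc_eq numeral_2_eq_2\<close>)
  define ps where "ps = zip [Suc i..<Suc i + z] (replicate z W)"
  define F where "F = foldl (fill_step sel k) [c0, c1, [i]] ps"
  have W: "\<forall>p\<in>set ps. snd p = W"
    unfolding ps_def by (auto dest: set_zip_rightD)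
  have fs: "fst ` set ps \<subseteq> {Suc i..<Suc i + z}"
    using fst_zip_sub[of "[Suc i..<Suc i + z]" "replicate z W"] unfolding ps_def by (simp only: set_upt)
  have WT: "length F = length [c0,c1,[i]] \<and> (\<forall>j<length [c0,c1,[i]]. \<exists>e. F!j = [c0,c1,[i]]!j @ e \<and> set e \<subseteq> fst ` set ps)"
    unfolding F_def by (rule Wtail[OF W])
  then have L: "length F = 3" by simp
  have P: "\<forall>j<3. \<exists>e. F!j = [c0,c1,[i]]!j @ e \<and> set e \<subseteq> fst ` set ps" using WT by simp
  have lt: "(0::nat) < 3" "(1::nat) < 3" "(2::nat) < 3" by simp_all
  obtain e0 where e0': "F ! 0 = [c0,c1,[i]]!0 @ e0" "set e0 \<subseteq> fst ` set ps" using P[rule_format, OF lt(1)] by blast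
  obtain e1 where e1': "F ! 1 = [c0,c1,[i]]!1 @ e1" "set e1 \<subseteq> fst ` set ps" using P[rule_format, OF lt(2)] by blast
  obtain e2 where e2': "F ! 2 = [c0,c1,[i]]!2 @ e2" using P[rule_format, OF lt(3)] by blast
  have e0: "F ! 0 = c0 @ e0" "set e0 \<subseteq> {Suc i..<Suc i + z}" using e0' fs by auto
  have e1: "F ! 1 = c1 @ e1" "set e1 \<subseteq> {Suc i..<Suc i + z}" using e1' fs by auto
  have e2: "F ! 2 = [i] @ e2" using e2' by simp
  have "F = [F!0, F!1, F!2]" using L by (simp add: list_eq_iff_nth_eq less_Suc_eq numeral_3_eq_3 numeral_2_eq_2 nth_Cons')
  then have "F = [c0 @ e0, c1 @ e1, i # e2]" using e0 e1 e2 by simp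
  moreover have "\<forall>v \<in> set e0 \<union> set e1. i < v" using e0 e1 by auto
  ultimately show ?thesis using st F_def ps_def by auto
qed

lemma top3: "top_ranks [c0, c1, c2] = [0, entry_rank [c0,c1,c2] [0] (hd c1 - 1),
   entry_rank [c0,c1,c2] [0, entry_rank [c0,c1,c2] [0] (hd c1 - 1)] (hd c2 - 1)]"
  by (simp add: top_ranks_def numeral_3_eq_3 upt_conv_Cons)

lemma fill_unfold:
  "fill sel [a,1,c] (S 0 # replicate x W @ S 1 # replicate y W @ S 2 # replicate z W) =
   foldl (fill_step sel [a,1,c])
     (fill_step sel [a,1,c]
       (foldl (fill_step sel [a,1,c])
          (fill_step sel [a,1,c] (foldl (fill_step sel [a,1,c]) [[1],[],[]] (zip [2..<2+x] (replicate x W))) (2+x, S 1))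
          (zip [Suc (2+x)..<Suc (2+x) + y] (replicate y W)))
       (Suc (2+x) + y, S 2))
     (zip [Suc (Suc (2+x) + y)..<Suc (Suc (2+x) + y) + z] (replicate z W))" (is "_ = ?R")
proof -
  define n where "n = Suc (length (S 0 # replicate x W @ S 1 # replicate y W @ S 2 # replicate z W))"
  have n: "n = 2 + length (replicate x W) + Suc (length (replicate y W @ S 2 # replicate z W))"
    by (simp add: n_def)
  have z1: "zip [2..<n] (replicate x W @ S 1 # (replicate y W @ S 2 # replicate z W)) =
     zip [2..<2+x] (replicate x W) @ (2+x, S 1) # zip [Suc (2+x)..<n] (replicate y W @ S 2 # replicate z W)"
    using zcons[OF n] by simp
  have n2: "n = Suc (2+x) + length (replicate y W) + Suc (length (replicate z W))"
    by (simp add: n_def)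
  have z2: "zip [Suc (2+x)..<n] (replicate y W @ S 2 # replicate z W) =
     zip [Suc (2+x)..<Suc (2+x) + y] (replicate y W) @ (Suc (2+x) + y, S 2) # zip [Suc (Suc (2+x) + y)..<n] (replicate z W)"
    using zcons[OF n2] by simp
  have n3: "n = Suc (Suc (2+x) + y) + z" by (simp add: n_def)
  have rp: "[1] # replicate (length [a,1,c] - 1) [] = [[1::nat],[],[]]" by (simp add: numeral_2_eq_2)
  have "fill sel [a,1,c] (S 0 # replicate x W @ S 1 # replicate y W @ S 2 # replicate z W) =
    foldl (fill_step sel [a,1,c]) [[1],[],[]] (zip [2..<n] (replicate x W @ S 1 # (replicate y W @ S 2 # replicate z W)))"
    unfolding fill_def n_def[symmetric] rp list.sel(3) by (rule refl)
  also have "\<dots> = ?R" unfolding z1 z2 by (simp only: foldl_append foldl_Cons n3)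
  finally show ?thesis .
qed

lemma final:
  assumes c0: "c0 = [1..<x+2] @ d0" and c1: "c1 = (x+2) # d1" and i: "i = Suc (2+x) + y"
   and H: "(r0 < length c0 \<and> c0!r0 = i - 1 \<and> (\<forall>r<r0. c0!r \<noteq> i-1) \<and> R = r0) \<or>
           (i - 1 \<notin> set c0 \<and> r0 < length c1 \<and> c1!r0 = i-1 \<and> (\<forall>r<r0. c1!r \<noteq> i-1) \<and> R = x + r0)"
  shows "sum_list (top_ranks (foldl (fill_step sel [a,1,c]) (fill_step sel [a,1,c] [c0,c1,[]] (i, S 2))
            (zip [Suc i..<Suc i + z] (replicate z W)))) = x + R"
proof -
  obtain e0 e1 e2 where E: "foldl (fill_step sel [a,1,c]) (fill_step sel [a,1,c] [c0,c1,[]] (i, S 2))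
            (zip [Suc i..<Suc i + z] (replicate z W)) = [c0@e0, c1@e1, i#e2]" and V: "\<forall>v\<in>set e0 \<union> set e1. i < v"
    using fin[of c0 c1 sel "[a,1,c]" i z] c0 c1 by auto
  have R1: "entry_rank ((c0@e0) # [c1@e1, i#e2]) [0] (x+1) = [0]!0 + x"
    by (rule er0) (use c0 in \<open>auto simp: nth_append\<close>)
  have R2: "entry_rank ((c0@e0) # (c1@e1) # [i#e2]) [0, x] (i-1) = R"
  proof (cases "r0 < length c0 \<and> c0!r0 = i - 1 \<and> (\<forall>r<r0. c0!r \<noteq> i-1) \<and> R = r0")
    case True
    have "entry_rank ((c0@e0) # [c1@e1, i#e2]) [0, x] (i-1) = [0, x]!0 + r0"
      by (rule er0) (use True in auto)
    then show ?thesis using True by simp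
  next
    case False
    then have F: "i - 1 \<notin> set c0 \<and> r0 < length c1 \<and> c1!r0 = i-1 \<and> (\<forall>r<r0. c1!r \<noteq> i-1) \<and> R = x + r0"
      using H by blast
    have "i - 1 \<notin> set e0" using V by (metis UnI1 diff_le_self not_le)
    then have "entry_rank ((c0@e0) # (c1@e1) # [i#e2]) [0, x] (i-1) = [0, x]!1 + r0"
      by (intro er1) (use F in auto)
    then show ?thesis using F by simp
  qed
  have h: "hd (c1 @ e1) - 1 = x + 1" using c1 by simp
  show ?thesis unfolding E top3 h using R1 R2 by simp
qed

lemma Wstep':
  assumes "active_cols k F = AC" "j0 \<in> AC" "sel ((\<lambda>j. last (F ! j)) ` AC) = last (F ! j0)"
    "\<forall>j\<in>AC. j < j0 \<longrightarrow> last (F ! j) \<noteq> last (F ! j0)"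
  shows "fill_step sel k F (i, W) = F[j0 := F ! j0 @ [i]]"
  by (rule Wstep) (use assms in auto)

lemma pre:
  assumes sel1: "\<And>v. sel {v} = v" and "x \<le> a"
  shows "fill_step sel [a,1,c] (foldl (fill_step sel [a,1,c]) [[1],[],[]] (zip [2..<2+x] (replicate x W))) (2+x, S 1)
     = [[1..<x+2],[x+2],[]]"
proof -
  have "foldl (fill_step sel [a,1,c]) [[1],[],[]] (zip [2..<2+x] (replicate x W)) = [[1] @ [2..<2+x], [], []]"
    by (rule colfill) (use assms in auto)
  moreover have "[1] @ [2..<2+x] = [1..<x+2]"
  proof -
    have e: "[1..<2] = [1::nat]" by (simp add: numeral_2_eq_2)
    have "[1..<2+x] = [1..<2] @ [2..<2+x]" by (rule upt_add_eq_append) simp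
    then show ?thesis using e by (simp only: add.commute)
  qed
  moreover have "fill_step sel [a,1,c] [[1..<x+2], [], []] (2+x, S 1) = [[1..<x+2], [], []][1 := [2+x]]"
    by (rule Sstep) auto
  ultimately show ?thesis by simp
qed

definition Rf :: "nat \<Rightarrow> nat \<Rightarrow> nat" where
  "Rf x y = (if y = 0 then x else if y \<le> 2 then x + 1 else x + y - 1)"

lemma res:
  assumes sel1: "\<And>v. sel {v} = v" and "x \<le> a"
   and PH: "foldl (fill_step sel [a,1,c]) [[1..<x+2],[x+2],[]] (zip [Suc (2+x)..<Suc (2+x) + y] (replicate y W)) = [cA,cB,[]]"
   and cA: "cA = [1..<x+2] @ dA" and cB: "cB = (x+2) # dB"
   and H: "(rr < length cA \<and> cA!rr = x + y + 2 \<and> (\<forall>r<rr. cA!r \<noteq> x + y + 2) \<and> R = rr) \<or>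
           (x + y + 2 \<notin> set cA \<and> rr < length cB \<and> cB!rr = x + y + 2 \<and> (\<forall>r<rr. cB!r \<noteq> x + y + 2) \<and> R = x + rr)"
  shows "sum_list (top_ranks (fill sel [a,1,c] (S 0 # replicate x W @ S 1 # replicate y W @ S 2 # replicate z W))) = x + R"
  unfolding fill_unfold pre[OF sel1 assms(2)] PH
  by (rule final[OF cA cB refl]) (use H in simp)

lemma res0:
  assumes sel1: "\<And>v. sel {v} = v" and "x \<le> a"
   and PH: "foldl (fill_step sel [a,1,c]) [[1..<x+2],[x+2],[]] (zip [Suc (2+x)..<Suc (2+x) + y] (replicate y W)) = [[1..<x+2] @ dA,(x+2) # dB,[]]"
   and "rr < length ([1..<x+2] @ dA)" "([1..<x+2] @ dA)!rr = x + y + 2" "\<forall>r<rr. ([1..<x+2] @ dA)!r \<noteq> x + y + 2"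
  shows "sum_list (top_ranks (fill sel [a,1,c] (S 0 # replicate x W @ S 1 # replicate y W @ S 2 # replicate z W))) = x + rr"
  by (rule res[OF sel1 assms(2) PH refl refl]) (use assms(4-) in blast)

lemma res1:
  assumes sel1: "\<And>v. sel {v} = v" and "x \<le> a"
   and PH: "foldl (fill_step sel [a,1,c]) [[1..<x+2],[x+2],[]] (zip [Suc (2+x)..<Suc (2+x) + y] (replicate y W)) = [[1..<x+2] @ dA,(x+2) # dB,[]]"
   and "x + y + 2 \<notin> set ([1..<x+2] @ dA)" "rr < length ((x+2) # dB)" "((x+2) # dB)!rr = x + y + 2" "\<forall>r<rr. ((x+2) # dB)!r \<noteq> x + y + 2"
  shows "sum_list (top_ranks (fill sel [a,1,c] (S 0 # replicate x W @ S 1 # replicate y W @ S 2 # replicate z W))) = x + (x + rr)"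
  by (rule res[OF sel1 assms(2) PH refl refl]) (use assms(4-) in blast)

declare upt_Suc[simp del]

abbreviation "pth x y z \<equiv> S 0 # replicate x W @ S 1 # replicate y W @ S 2 # replicate z W"

lemma nth_cons_upt: "t \<le> n \<Longrightarrow> (b # [m..<m+n]) ! t = (if t = 0 then b else m + (t - 1))"
  by (cases t) auto

lemma case_y0:
  assumes sel1: "\<And>v. sel {v} = v" and "x \<le> a"
  shows "sum_list (top_ranks (fill sel [a,1,c] (pth x 0 z))) = x + Rf x 0"
proof -
  have "sum_list (top_ranks (fill sel [a,1,c] (pth x 0 z))) = x + x"
    using res1[OF sel1 assms(2), where y=0 and dA="[]" and dB="[]" and rr=0] by simp
  then show ?thesis by (simp add: Rf_def)
qed

lemma case_y1_col1:
  assumes sel1: "\<And>v. sel {v} = v" and "x \<le> a"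
   and st: "fill_step sel [a,1,c] [[1..<x+2],[x+2],[]] (x+3, W) = [[1..<x+2],[x+2,x+3],[]]"
  shows "sum_list (top_ranks (fill sel [a,1,c] (pth x 1 z))) = x + Rf x 1"
proof -
  have z: "zip [Suc (2+x)..<Suc (2+x) + 1] (replicate 1 W) = [(x+3, W)]" by (simp add: eval_nat_numeral upt_conv_Cons)
  have "sum_list (top_ranks (fill sel [a,1,c] (pth x 1 z))) = x + (x + 1)"
  proof -
    have PH: "foldl (fill_step sel [a,1,c]) [[1..<x+2],[x+2],[]] (zip [Suc (2+x)..<Suc (2+x) + 1] (replicate 1 W)) = [[1..<x+2] @ [], (x+2) # [x+3], []]"
      unfolding z using st by simp
    show ?thesis by (rule res1[OF sel1 assms(2) PH]) simp_all
  qed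
  then show ?thesis by (simp add: Rf_def)
qed

lemma case_y1_col0:
  assumes sel1: "\<And>v. sel {v} = v" and "x \<le> a"
   and st: "fill_step sel [a,1,c] [[1..<x+2],[x+2],[]] (x+3, W) = [[1..<x+2] @ [x+3],[x+2],[]]"
  shows "sum_list (top_ranks (fill sel [a,1,c] (pth x 1 z))) = x + Rf x 1"
proof -
  have z: "zip [Suc (2+x)..<Suc (2+x) + 1] (replicate 1 W) = [(x+3, W)]" by (simp add: eval_nat_numeral upt_conv_Cons)
  have "sum_list (top_ranks (fill sel [a,1,c] (pth x 1 z))) = x + (x + 1)"
  proof -
    have PH: "foldl (fill_step sel [a,1,c]) [[1..<x+2],[x+2],[]] (zip [Suc (2+x)..<Suc (2+x) + 1] (replicate 1 W)) = [[1..<x+2] @ [x+3], (x+2) # [], []]"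
      unfolding z using st by simp
    show ?thesis by (rule res0[OF sel1 assms(2) PH]) (simp_all add: nth_append)
  qed
  then show ?thesis by (simp add: Rf_def)
qed

lemma case_y2:
  assumes sel1: "\<And>v. sel {v} = v" and "x + y' + 2 \<le> a + 1"
   and st: "foldl (fill_step sel [a,1,c]) [[1..<x+2],[x+2],[]] [(x+3, W), (x+4, W)] = [[1..<x+2] @ [b],[x+2,b'],[]]"
   and bb: "(b = x+3 \<and> b' = x+4) \<or> (b = x+4 \<and> b' = x+3)"
  shows "sum_list (top_ranks (fill sel [a,1,c] (pth x (Suc (Suc y')) z))) = x + Rf x (Suc (Suc y'))"
proof -
  have xa: "x \<le> a" using assms(2) by simp
  have z: "zip [Suc (2+x)..<Suc (2+x) + Suc (Suc y')] (replicate (Suc (Suc y')) W)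
      = [(x+3, W), (x+4, W)] @ zip [x+5..<x+5+y'] (replicate y' W)"
  proof -
    have u: "[Suc (2+x)..<Suc (2+x) + Suc (Suc y')] = (x+3) # (x+4) # [x+5..<x+5+y']"
      by (simp add: upt_conv_Cons eval_nat_numeral)
    show ?thesis by (simp only: u replicate_Suc zip_Cons_Cons append_Cons append_Nil)
  qed
  have cf: "foldl (fill_step sel [a,1,c]) [[1..<x+2] @ [b],[x+2,b'],[]] (zip [x+5..<x+5+y'] (replicate y' W))
     = [([1..<x+2] @ [b]) @ [x+5..<x+5+y'], [x+2,b'], []]"
    by (rule colfill[OF sel1]) (use assms(2) in auto)
  have PH: "foldl (fill_step sel [a,1,c]) [[1..<x+2],[x+2],[]] (zip [Suc (2+x)..<Suc (2+x) + Suc (Suc y')] (replicate (Suc (Suc y')) W))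
     = [[1..<x+2] @ ([b] @ [x+5..<x+5+y']), [x+2,b'], []]"
    unfolding z foldl_append st cf by simp
  show ?thesis
  proof (cases "y' = 0")
    case True
    show ?thesis
    proof (cases "b = x+4")
      case True
      have "sum_list (top_ranks (fill sel [a,1,c] (pth x (Suc (Suc y')) z))) = x + (x + 1)"
        by (rule res0[OF sel1 xa PH]) (use True `y' = 0` in \<open>auto simp: nth_append\<close>)
      then show ?thesis using `y' = 0` by (simp add: Rf_def)
    next
      case False
      then have b: "b = x + 3" "b' = x + 4" using bb by auto
      have "sum_list (top_ranks (fill sel [a,1,c] (pth x (Suc (Suc y')) z))) = x + (x + 1)"
        by (rule res1[OF sel1 xa PH]) (use b `y' = 0` in \<open>auto simp: nth_append\<close>)
      then show ?thesis using `y' = 0` by (simp add: Rf_def)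
    qed
  next
    case False
    have "sum_list (top_ranks (fill sel [a,1,c] (pth x (Suc (Suc y')) z))) = x + (x + y' + 1)"
      by (rule res0[OF sel1 xa PH]) (use False bb in \<open>auto simp: nth_append nth_cons_upt\<close>)
    then show ?thesis using False by (simp add: Rf_def)
  qed
qed

lemma Min_res:
  assumes "x \<le> a" "x + y \<le> a + 1"
  shows "sum_list (top_ranks (fill Min [a,1,c] (pth x y z))) = x + Rf x y"
proof -
  have sel1: "\<And>v. Min {v} = v" by simp
  consider "y = 0" | "y = 1" | y' where "y = Suc (Suc y')"
    by (metis One_nat_def not0_implies_Suc)
  then show ?thesis
  proof cases
    case 1 then show ?thesis using case_y0[OF sel1 assms(1)] by simp
  next
    case 2
    show ?thesis
    proof (cases "x < a")
      case True
      have "fill_step Min [a,1,c] [[1..<x+2],[x+2],[]] (x+3, W) = [[1..<x+2],[x+2],[]][0 := [[1..<x+2],[x+2],[]]!0 @ [x+3]]"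
        by (rule Wstep'[where AC="{0,1}"]) (use True in \<open>auto simp: act3\<close>)
      then have st: "fill_step Min [a,1,c] [[1..<x+2],[x+2],[]] (x+3, W) = [[1..<x+2] @ [x+3],[x+2],[]]" by simp
      show ?thesis using case_y1_col0[OF sel1 assms(1) st] 2 by simp
    next
      case False
      have "fill_step Min [a,1,c] [[1..<x+2],[x+2],[]] (x+3, W) = [[1..<x+2],[x+2],[]][1 := [[1..<x+2],[x+2],[]]!1 @ [x+3]]"
        by (rule Wstep'[where AC="{1}"]) (use False assms(1) in \<open>auto simp: act3\<close>)
      then have st: "fill_step Min [a,1,c] [[1..<x+2],[x+2],[]] (x+3, W) = [[1..<x+2],[x+2,x+3],[]]" by simp
      show ?thesis using case_y1_col1[OF sel1 assms(1) st] 2 by simp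
    qed
  next
    case 3
    have xy: "x + y' + 2 \<le> a + 1" using assms(2) 3 by simp
    have "fill_step Min [a,1,c] [[1..<x+2],[x+2],[]] (x+3, W) = [[1..<x+2],[x+2],[]][0 := [[1..<x+2],[x+2],[]]!0 @ [x+3]]"
      by (rule Wstep'[where AC="{0,1}"]) (use xy in \<open>auto simp: act3\<close>)
    then have st1: "fill_step Min [a,1,c] [[1..<x+2],[x+2],[]] (x+3, W) = [[1..<x+2] @ [x+3],[x+2],[]]" by simp
    have st2: "fill_step Min [a,1,c] [[1..<x+2] @ [x+3],[x+2],[]] (x+4, W) = [[1..<x+2] @ [x+3],[x+2,x+4],[]]"
    proof (cases "x + 2 < a + 1")
      case True
      have "fill_step Min [a,1,c] [[1..<x+2] @ [x+3],[x+2],[]] (x+4, W) = [[1..<x+2] @ [x+3],[x+2],[]][1 := [[1..<x+2] @ [x+3],[x+2],[]]!1 @ [x+4]]"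
        by (rule Wstep'[where AC="{0,1}"]) (use True in \<open>auto simp: act3\<close>)
      then show ?thesis by simp
    next
      case False
      have "fill_step Min [a,1,c] [[1..<x+2] @ [x+3],[x+2],[]] (x+4, W) = [[1..<x+2] @ [x+3],[x+2],[]][1 := [[1..<x+2] @ [x+3],[x+2],[]]!1 @ [x+4]]"
        by (rule Wstep'[where AC="{1}"]) (use False in \<open>auto simp: act3\<close>)
      then show ?thesis by simp
    qed
    have st: "foldl (fill_step Min [a,1,c]) [[1..<x+2],[x+2],[]] [(x+3, W), (x+4, W)] = [[1..<x+2] @ [x+3],[x+2,x+4],[]]"
      using st1 st2 by simp
    show ?thesis using case_y2[OF sel1 xy st] 3 by simp
  qed
qed

lemma Max_res:
  assumes "x \<le> a" "x + y \<le> a + 1"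
  shows "sum_list (top_ranks (fill Max [a,1,c] (pth x y z))) = x + Rf x y"
proof -
  have sel1: "\<And>v. Max {v} = v" by simp
  consider "y = 0" | "y = 1" | y' where "y = Suc (Suc y')"
    by (metis One_nat_def not0_implies_Suc)
  then show ?thesis
  proof cases
    case 1 then show ?thesis using case_y0[OF sel1 assms(1)] by simp
  next
    case 2
    have st: "fill_step Max [a,1,c] [[1..<x+2],[x+2],[]] (x+3, W) = [[1..<x+2],[x+2,x+3],[]]"
    proof (cases "x < a")
      case True
      have "fill_step Max [a,1,c] [[1..<x+2],[x+2],[]] (x+3, W) = [[1..<x+2],[x+2],[]][1 := [[1..<x+2],[x+2],[]]!1 @ [x+3]]"
        by (rule Wstep'[where AC="{0,1}"]) (use True in \<open>auto simp: act3\<close>)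
      then show ?thesis by simp
    next
      case False
      have "fill_step Max [a,1,c] [[1..<x+2],[x+2],[]] (x+3, W) = [[1..<x+2],[x+2],[]][1 := [[1..<x+2],[x+2],[]]!1 @ [x+3]]"
        by (rule Wstep'[where AC="{1}"]) (use False assms(1) in \<open>auto simp: act3\<close>)
      then show ?thesis by simp
    qed
    show ?thesis using case_y1_col1[OF sel1 assms(1) st] 2 by simp
  next
    case 3
    have xy: "x + y' + 2 \<le> a + 1" using assms(2) 3 by simp
    have "fill_step Max [a,1,c] [[1..<x+2],[x+2],[]] (x+3, W) = [[1..<x+2],[x+2],[]][1 := [[1..<x+2],[x+2],[]]!1 @ [x+3]]"
      by (rule Wstep'[where AC="{0,1}"]) (use xy in \<open>auto simp: act3\<close>)
    then have st1: "fill_step Max [a,1,c] [[1..<x+2],[x+2],[]] (x+3, W) = [[1..<x+2],[x+2,x+3],[]]" by simp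
    have "fill_step Max [a,1,c] [[1..<x+2],[x+2,x+3],[]] (x+4, W) = [[1..<x+2],[x+2,x+3],[]][0 := [[1..<x+2],[x+2,x+3],[]]!0 @ [x+4]]"
      by (rule Wstep'[where AC="{0}"]) (use xy in \<open>auto simp: act3\<close>)
    then have st2: "fill_step Max [a,1,c] [[1..<x+2],[x+2,x+3],[]] (x+4, W) = [[1..<x+2] @ [x+4],[x+2,x+3],[]]" by simp
    have st: "foldl (fill_step Max [a,1,c]) [[1..<x+2],[x+2],[]] [(x+3, W), (x+4, W)] = [[1..<x+2] @ [x+4],[x+2,x+3],[]]"
      using st1 st2 by simp
    show ?thesis using case_y2[OF sel1 xy st] 3 by simp
  qed
qed

theorem proposition5p6:
  fixes a c :: nat
  assumes "0 < a" and "0 < c"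
  shows "(\<forall>\<pi> \<in> dyck_paths [a, 1, c]. depth [a, 1, c] \<pi> = bounce [a, 1, c] \<pi>)
       \<and> (\<forall>q t :: 'r :: comm_semiring_1.
            (\<Sum>\<pi> \<in> dyck_paths [a, 1, c]. q ^ area [a, 1, c] \<pi> * t ^ depth [a, 1, c] \<pi>)
          = (\<Sum>\<pi> \<in> dyck_paths [a, 1, c]. q ^ area [a, 1, c] \<pi> * t ^ bounce [a, 1, c] \<pi>))"
proof -
  have eq: "\<forall>\<pi> \<in> dyck_paths [a, 1, c]. depth [a, 1, c] \<pi> = bounce [a, 1, c] \<pi>"
  proof
    fix \<pi> assume "\<pi> \<in> dyck_paths [a, 1, c]"
    then obtain x y z where p: "\<pi> = pth x y z" and "x \<le> a" "x + y \<le> a + 1"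
      using dyck_char by blast
    then show "depth [a, 1, c] \<pi> = bounce [a, 1, c] \<pi>"
      unfolding depth_def bounce_def eta_def eta_star_def p
      using Min_res Max_res by simp
  qed
  moreover have "\<forall>q t :: 'r :: comm_semiring_1.
            (\<Sum>\<pi> \<in> dyck_paths [a, 1, c]. q ^ area [a, 1, c] \<pi> * t ^ depth [a, 1, c] \<pi>)
          = (\<Sum>\<pi> \<in> dyck_paths [a, 1, c]. q ^ area [a, 1, c] \<pi> * t ^ bounce [a, 1, c] \<pi>)"
    using eq by (intro allI sum.cong) auto
  ultimately show ?thesis by blast
qed

end
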